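(* Let $k$ be any field, $A=kQ_A/I_A$ a monomial algebra with vertices $e_1,\dots,e_n$, and $B$ the algebra obtained by gluing the distinct non-isolated vertices $e_1,e_n$. Then $\mathrm{kspp}(1,n)\ge\mathrm{sp}(1,n)$. In particular, the number of special pairs is at least the number of special paths.
   Context: Monomial algebra: $A=kQ_A/I_A$, $Q_A$ finite quiver, $I_A$ admissible, generated by a minimal set $Z_A$ of paths of length $\ge2$; $\mathcal B_A$: paths (including trivial ones) avoiding elements of $Z_A$ as subpaths. Gluing: $B\subseteq A$ generated by $f_1=e_1+e_n$, $f_i=e_i$ ($2\le i\le n-1$) and all arrows; $B\cong kQ_B/I_B$, $Q_B$ obtained by identifying $e_1,e_n$ to $f_1$ (arrow $\alpha\mapsto\alpha^*$, path $p=a_m\cdots a_1\mapsto p^*=a_m^*\cdots a_1^*$, $e_1^*=e_n^*=f_1$), $I_B$ generated by $Z_B=\{r^*:r\in Z_A\}\cup\{b^*c^*: b,c\text{ arrows},\ t(c),s(b)\in\{e_1,e_n\},\ t(c)\ne s(b)\}$; $\mathcal B_B$ its basis paths. For path sets $X,Y$, $k(X\|Y)$ has basis the pairs $x\|y$ of parallel paths. For monomial $\Lambda=kQ/\langle Z\rangle$ with basis paths $\mathcal B$: $\delta^0(e\|\gamma)=\sum_{a\in Q_1,s(a)=e,a\gamma\in\mathcal B}a\|a\gamma-\sum_{a\in Q_1,t(a)=e,\gamma a\in\mathcal B}a\|\gamma a$; $\delta^1(a\|\gamma)=\sum_{r\in Z}r\|r^{a\|\gamma}$, where $r^{a\|\gamma}$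 is the sum over occurrences of $a$ in $r$ of the path obtained by replacing that occurrence by $\gamma$, keeping only paths in $\mathcal B$; subscripts $A,B$ indicate the algebra. A special path is a $p\in\mathcal B_A$ from $e_1$ to $e_n$ or from $e_n$ to $e_1$ with $\delta^0_B(f_1\|p^* )\ne0$ (equivalently $ap\notin I_A$ or $pa\notin I_A$ for some arrow $a$); $\mathrm{sp}(1,n)$ is their number. A special pair is $(\alpha,p)$, $\alpha$ an arrow starting or ending at $e_1$ or $e_n$, $p\in\mathcal B_A$, $\alpha^*$ parallel to $p^*$ in $Q_B$ but $\alpha$ not parallel to $p$ in $Q_A$. $Z_{spp}$ is the intersection of $\mathrm{Ker}\,\delta^1_B$ with the span of the $\alpha^*\|p^*$ over special pairs, and $\mathrm{kspp}(1,n)=\dim_kZ_{spp}$. *)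

theory Defs
  imports Complex_Main "HOL-Library.Sublist" "HOL-Library.Function_Algebras"
begin

text \<open>Convention: the list is written in order of traversal, so the path a_m ... a_1 of the paper
  (a_1 traversed first) is the list [a_1, ..., a_m].\<close>

datatype ('v, 'a) qpath = Triv 'v | NT "'a list"

definition valid_path ::
  "'v set \<Rightarrow> 'a set \<Rightarrow> ('a \<Rightarrow> 'v) \<Rightarrow> ('a \<Rightarrow> 'v) \<Rightarrow> ('v, 'a) qpath \<Rightarrow> bool" where
  "valid_path V E s t p = (case p of
      Triv v \<Rightarrow> v \<in> V
    | NT l \<Rightarrow> l \<noteq> [] \<and> set l \<subseteq> E \<and> (\<forall>i. Suc i < length l \<longrightarrow> t (l ! i) = s (l ! Suc i)))"

fun psrc :: "('a \<Rightarrow> 'v) \<Rightarrow> ('v, 'a) qpath \<Rightarrow> 'v" where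
  "psrc s (Triv v) = v"
| "psrc s (NT l) = s (hd l)"

fun ptgt :: "('a \<Rightarrow> 'v) \<Rightarrow> ('v, 'a) qpath \<Rightarrow> 'v" where
  "ptgt t (Triv v) = v"
| "ptgt t (NT l) = t (last l)"

fun plen :: "('v, 'a) qpath \<Rightarrow> nat" where
  "plen (Triv v) = 0"
| "plen (NT l) = length l"

text \<open>r occurs as a subpath of p (only used for nontrivial r).\<close>
fun subpath :: "('v, 'a) qpath \<Rightarrow> ('v, 'a) qpath \<Rightarrow> bool" where
  "subpath (NT l) (NT l') = sublist l l'"
| "subpath (Triv v) p = False"
| "subpath (NT l) (Triv v) = False"

text \<open>Concatenations: (arrow after path) a\<gamma> and (path after arrow) \<gamma>a.\<close>
fun arrow_after :: "'a \<Rightarrow> ('v, 'a) qpath \<Rightarrow> ('v, 'a) qpath" where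
  "arrow_after a (Triv v) = NT [a]"
| "arrow_after a (NT l) = NT (l @ [a])"

fun arrow_before :: "('v, 'a) qpath \<Rightarrow> 'a \<Rightarrow> ('v, 'a) qpath" where
  "arrow_before (Triv v) a = NT [a]"
| "arrow_before (NT l) a = NT (a # l)"

text \<open>kQ/\<langle>Z\<rangle> with Z a minimal set of paths of length \<ge> 2 generating an admissible ideal.\<close>
definition monomial_data ::
  "'v set \<Rightarrow> 'a set \<Rightarrow> ('a \<Rightarrow> 'v) \<Rightarrow> ('a \<Rightarrow> 'v) \<Rightarrow> ('v, 'a) qpath set \<Rightarrow> bool" where
  "monomial_data V E s t Z \<longleftrightarrow>
     finite V \<and> finite E \<and> (\<forall>a\<in>E. s a \<in> V \<and> t a \<in> V) \<and>
     finite Z \<and>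
     (\<forall>r\<in>Z. valid_path V E s t r \<and> plen r \<ge> 2) \<and>
     (\<forall>r\<in>Z. \<forall>r'\<in>Z. subpath r r' \<longrightarrow> r = r') \<and>
     (\<exists>m. \<forall>p. valid_path V E s t p \<and> plen p \<ge> m \<longrightarrow> (\<exists>r\<in>Z. subpath r p))"

definition basis_paths ::
  "'v set \<Rightarrow> 'a set \<Rightarrow> ('a \<Rightarrow> 'v) \<Rightarrow> ('a \<Rightarrow> 'v) \<Rightarrow> ('v, 'a) qpath set \<Rightarrow> ('v, 'a) qpath set" where
  "basis_paths V E s t Z = {p. valid_path V E s t p \<and> \<not> (\<exists>r\<in>Z. subpath r p)}"

text \<open>Elements of k(Q_1 || B) are functions on pairs (arrow, path) with values in the field;
  elements of k(Z || B) are functions on pairs (relation, path).\<close>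

definition delta0 ::
  "'a set \<Rightarrow> ('a \<Rightarrow> 'v) \<Rightarrow> ('a \<Rightarrow> 'v) \<Rightarrow> ('v, 'a) qpath set \<Rightarrow> 'v \<Rightarrow> ('v, 'a) qpath
     \<Rightarrow> ('a \<times> ('v, 'a) qpath) \<Rightarrow> 'k::field" where
  "delta0 E s t Bs e \<gamma> = (\<lambda>(a, q).
      (if a \<in> E \<and> s a = e \<and> q = arrow_after a \<gamma> \<and> q \<in> Bs then 1 else 0)
    - (if a \<in> E \<and> t a = e \<and> q = arrow_before \<gamma> a \<and> q \<in> Bs then 1 else 0))"

definition replace_at :: "'a list \<Rightarrow> nat \<Rightarrow> ('v, 'a) qpath \<Rightarrow> ('v, 'a) qpath" where
  "replace_at r i \<gamma> = (case \<gamma> of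
      NT l \<Rightarrow> NT (take i r @ l @ drop (Suc i) r)
    | Triv v \<Rightarrow> (if take i r @ drop (Suc i) r = [] then Triv v
                 else NT (take i r @ drop (Suc i) r)))"

definition occ_coeff ::
  "('v, 'a) qpath set \<Rightarrow> ('v, 'a) qpath \<Rightarrow> ('v, 'a) qpath \<Rightarrow> 'a \<Rightarrow> ('v, 'a) qpath \<Rightarrow> nat" where
  "occ_coeff Bs r q a \<gamma> = (case r of
      Triv v \<Rightarrow> 0
    | NT l \<Rightarrow> card {i. i < length l \<and> l ! i = a \<and> replace_at l i \<gamma> = q \<and> q \<in> Bs})"

text \<open>\<delta>^1 applied to a finitely supported element c of k(Q_1 || B) (extended linearly).\<close>
definition delta1 ::
  "('v, 'a) qpath set \<Rightarrow> ('v, 'a) qpath set \<Rightarrow> ('a \<times> ('v, 'a) qpath \<Rightarrow> 'k::field)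
     \<Rightarrow> (('v, 'a) qpath \<times> ('v, 'a) qpath \<Rightarrow> 'k)" where
  "delta1 Z Bs c = (\<lambda>(r, q). if r \<in> Z then
      (\<Sum>x\<in>{x. c x \<noteq> 0}. c x * of_nat (occ_coeff Bs r q (fst x) (snd x))) else 0)"

text \<open>A has vertices {1..n}; B is obtained by identifying vertex n with vertex 1 (= f_1).
  The arrows of Q_B are the arrows \<alpha>* of Q_A (same arrow set, glued endpoints).\<close>

definition glue :: "nat \<Rightarrow> nat \<Rightarrow> nat" where
  "glue n v = (if v = n then 1 else v)"

fun pstar :: "nat \<Rightarrow> (nat, 'a) qpath \<Rightarrow> (nat, 'a) qpath" where
  "pstar n (Triv v) = Triv (glue n v)"
| "pstar n (NT l) = NT l"

definition Z_B :: "nat \<Rightarrow> 'a set \<Rightarrow> ('a \<Rightarrow> nat) \<Rightarrow> ('a \<Rightarrow> nat) \<Rightarrow> (nat, 'a) qpath set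
     \<Rightarrow> (nat, 'a) qpath set" where
  "Z_B n E s t Z = pstar n ` Z \<union>
     {NT [c, b] | b c. b \<in> E \<and> c \<in> E \<and> t c \<in> {1, n} \<and> s b \<in> {1, n} \<and> t c \<noteq> s b}"

definition B_B :: "nat \<Rightarrow> 'a set \<Rightarrow> ('a \<Rightarrow> nat) \<Rightarrow> ('a \<Rightarrow> nat) \<Rightarrow> (nat, 'a) qpath set
     \<Rightarrow> (nat, 'a) qpath set" where
  "B_B n E s t Z = basis_paths {1..n-1} E (glue n \<circ> s) (glue n \<circ> t) (Z_B n E s t Z)"

definition special_path :: "'k::field itself \<Rightarrow> nat \<Rightarrow> 'a set \<Rightarrow> ('a \<Rightarrow> nat) \<Rightarrow> ('a \<Rightarrow> nat)
     \<Rightarrow> (nat, 'a) qpath set \<Rightarrow> (nat, 'a) qpath \<Rightarrow> bool" where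
  "special_path TYPE('k) n E s t Z p \<longleftrightarrow>
     p \<in> basis_paths {1..n} E s t Z \<and>
     ((psrc s p = 1 \<and> ptgt t p = n) \<or> (psrc s p = n \<and> ptgt t p = 1)) \<and>
     (delta0 E (glue n \<circ> s) (glue n \<circ> t) (B_B n E s t Z) 1 (pstar n p) :: _ \<Rightarrow> 'k) \<noteq> (\<lambda>_. 0)"

definition sp :: "'k::field itself \<Rightarrow> nat \<Rightarrow> 'a set \<Rightarrow> ('a \<Rightarrow> nat) \<Rightarrow> ('a \<Rightarrow> nat)
     \<Rightarrow> (nat, 'a) qpath set \<Rightarrow> nat" where
  "sp TYPE('k) n E s t Z = card {p. special_path TYPE('k) n E s t Z p}"

definition special_pair :: "nat \<Rightarrow> 'a set \<Rightarrow> ('a \<Rightarrow> nat) \<Rightarrow> ('a \<Rightarrow> nat)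
     \<Rightarrow> (nat, 'a) qpath set \<Rightarrow> 'a \<Rightarrow> (nat, 'a) qpath \<Rightarrow> bool" where
  "special_pair n E s t Z \<alpha> p \<longleftrightarrow>
     \<alpha> \<in> E \<and> (s \<alpha> \<in> {1, n} \<or> t \<alpha> \<in> {1, n}) \<and>
     p \<in> basis_paths {1..n} E s t Z \<and>
     glue n (s \<alpha>) = psrc (glue n \<circ> s) (pstar n p) \<and> glue n (t \<alpha>) = ptgt (glue n \<circ> t) (pstar n p) \<and>
     \<not> (s \<alpha> = psrc s p \<and> t \<alpha> = ptgt t p)"

definition fscale :: "'k::field \<Rightarrow> ('x \<Rightarrow> 'k) \<Rightarrow> ('x \<Rightarrow> 'k)" where
  "fscale c f = (\<lambda>x. c * f x)"

definition Z_spp :: "'k::field itself \<Rightarrow> nat \<Rightarrow> 'a set \<Rightarrow> ('a \<Rightarrow> nat) \<Rightarrow> ('a \<Rightarrow> nat)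
     \<Rightarrow> (nat, 'a) qpath set \<Rightarrow> ('a \<times> (nat, 'a) qpath \<Rightarrow> 'k) set" where
  "Z_spp TYPE('k) n E s t Z =
     {c. (\<forall>x. c x \<noteq> 0 \<longrightarrow> (\<exists>\<alpha> p. special_pair n E s t Z \<alpha> p \<and> x = (\<alpha>, pstar n p))) \<and>
         delta1 (Z_B n E s t Z) (B_B n E s t Z) c = (\<lambda>_. 0)}"

definition kspp :: "'k::field itself \<Rightarrow> nat \<Rightarrow> 'a set \<Rightarrow> ('a \<Rightarrow> nat) \<Rightarrow> ('a \<Rightarrow> nat)
     \<Rightarrow> (nat, 'a) qpath set \<Rightarrow> nat" where
  "kspp TYPE('k) n E s t Z = vector_space.dim (fscale :: 'k \<Rightarrow> _) (Z_spp TYPE('k) n E s t Z)"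

end

theory Submission
  imports Defs
begin


lemma valid_NT: "valid_path V E s t (NT l) \<longleftrightarrow> l \<noteq> [] \<and> set l \<subseteq> E \<and> successively (\<lambda>x y. t x = s y) l"
  by (simp add: valid_path_def successively_conv_nth)

lemma successively_sublist: "successively P L \<Longrightarrow> sublist M L \<Longrightarrow> successively P M"
  by (auto simp: sublist_def successively_append_iff)

lemma basis_sublist:
  assumes "NT L \<in> basis_paths V E s t Z" "sublist M L" "M \<noteq> []"
  shows "NT M \<in> basis_paths V E s t Z"
proof -
  have "set M \<subseteq> set L" using assms(2) by (rule set_mono_sublist)
  moreover have "\<not> subpath r (NT M)" if "r \<in> Z" for r
  proof
    assume "subpath r (NT M)"
    then obtain l' where "r = NT l'" "sublist l' M" by (cases r) auto
    then have "subpath r (NT L)" using assms(2) sublist_order.order_trans by auto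
    then show False using assms(1) that by (auto simp: basis_paths_def)
  qed
  ultimately show ?thesis using assms
    by (auto simp: basis_paths_def valid_NT intro: successively_sublist)
qed

lemma succ_upgrade:
  "successively R l \<Longrightarrow> (\<And>x y. sublist [x,y] l \<Longrightarrow> R x y \<Longrightarrow> R' x y) \<Longrightarrow> successively R' l"
proof (induction R l rule: successively.induct)
  case (3 P x y xs)
  have "sublist [x,y] (x#y#xs)" by (simp add: sublist_def) (metis append_Cons append_Nil)
  moreover have "\<And>a b. sublist [a,b] (y#xs) \<Longrightarrow> sublist [a,b] (x#y#xs)"
    by (meson sublist_Cons_right)
  ultimately show ?case using 3 by auto
qed auto

lemma sum_fun_apply: "(sum f A) x = sum (\<lambda>a. f a x) A"
  by (induction A rule: infinite_finite_induct) auto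

lemma of_nat_card_sum: "(of_nat (card {i. i < (N::nat) \<and> Q i}) :: 'k::semiring_1) = (\<Sum>i<N. if Q i then 1 else 0)"
proof -
  have "{i. i < N \<and> Q i} = {i\<in>{..<N}. Q i}" by auto
  then have "(of_nat (card {i. i < N \<and> Q i}) :: 'k) = sum (\<lambda>_. 1) {i\<in>{..<N}. Q i}" by simp
  also have "\<dots> = (\<Sum>i<N. if Q i then 1 else 0)" by (rule sum.inter_filter) (rule finite_lessThan)
  finally show ?thesis .
qed

lemma glue_neq: "glue n x = glue n y \<Longrightarrow> x \<noteq> y \<Longrightarrow> x \<in> {1,n} \<and> y \<in> {1,n}"
  by (auto simp: glue_def split: if_splits)

lemma glue_1n: "x \<in> {1,n} \<Longrightarrow> glue n x = 1"
  by (auto simp: glue_def)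

lemma glue_eq1: "glue n x = 1 \<Longrightarrow> x \<in> {1,n}"
  by (auto simp: glue_def split: if_splits)

lemma BB_BA:
  assumes "NT l \<in> B_B n E s t Z"
  shows "NT l \<in> basis_paths {1..n} E s t Z"
proof -
  have v: "l \<noteq> []" "set l \<subseteq> E" "successively (\<lambda>x y. glue n (t x) = glue n (s y)) l"
    and nz: "\<And>r. r \<in> Z_B n E s t Z \<Longrightarrow> \<not> subpath r (NT l)"
    using assms by (auto simp: B_B_def basis_paths_def valid_NT)
  have "successively (\<lambda>x y. t x = s y) l"
  proof (rule succ_upgrade[OF v(3)])
    fix x y assume sl: "sublist [x,y] l" and g: "glue n (t x) = glue n (s y)"
    show "t x = s y"
    proof (rule ccontr)
      assume ne: "t x \<noteq> s y"
      have "x \<in> E" "y \<in> E" using set_mono_sublist[OF sl] v(2) by auto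
      with glue_neq[OF g ne] ne have "NT [x,y] \<in> Z_B n E s t Z" by (auto simp: Z_B_def)
      with nz[of "NT [x,y]"] sl show False by simp
    qed
  qed
  moreover have "\<not> subpath r (NT l)" if "r \<in> Z" for r
  proof
    assume "subpath r (NT l)"
    then obtain l' where "r = NT l'" by (cases r) auto
    then have "r \<in> Z_B n E s t Z" using that by (force simp: Z_B_def)
    with nz \<open>subpath r (NT l)\<close> show False by auto
  qed
  ultimately show ?thesis using v by (auto simp: basis_paths_def valid_NT)
qed

definition endp :: "nat \<Rightarrow> ('a \<Rightarrow> nat) \<Rightarrow> ('a \<Rightarrow> nat) \<Rightarrow> 'a list \<Rightarrow> bool" where
  "endp n s t P \<longleftrightarrow> (s (hd P) = 1 \<and> t (last P) = n) \<or> (s (hd P) = n \<and> t (last P) = 1)"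

lemma special_NT:
  assumes "special_path TYPE('k::field) n E s t Z p" "1 \<noteq> n"
  obtains P where "p = NT P" "P \<noteq> []" "set P \<subseteq> E" "successively (\<lambda>x y. t x = s y) P"
    "endp n s t P" "NT P \<in> basis_paths {1..n} E s t Z"
    "(delta0 E (glue n \<circ> s) (glue n \<circ> t) (B_B n E s t Z) 1 (NT P) :: _ \<Rightarrow> 'k) \<noteq> (\<lambda>_. 0)"
proof (cases p)
  case (Triv v)
  then show ?thesis using assms by (auto simp: special_path_def)
next
  case (NT P)
  then show ?thesis using assms that by (auto simp: special_path_def basis_paths_def valid_NT endp_def)
qed

lemma delta0_NT:
  "(delta0 E (glue n \<circ> s) (glue n \<circ> t) BB 1 (NT P) (a, \<gamma>) :: 'k::field) =
     (if a \<in> E \<and> glue n (s a) = 1 \<and> \<gamma> = NT (P @ [a]) \<and> \<gamma> \<in> BB then 1 else 0)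
   - (if a \<in> E \<and> glue n (t a) = 1 \<and> \<gamma> = NT (a # P) \<and> \<gamma> \<in> BB then 1 else 0)"
  by (simp add: delta0_def)

lemma endp_props: "endp n s t P \<Longrightarrow> 1 \<noteq> n \<Longrightarrow> s (hd P) \<noteq> t (last P) \<and> glue n (s (hd P)) = 1 \<and> glue n (t (last P)) = 1"
  by (auto simp: endp_def glue_def)

lemma after_junction:
  assumes "NT (P @ [a]) \<in> B_B n E s t Z" "P \<noteq> []"
  shows "t (last P) = s a"
  using BB_BA[OF assms(1)] assms(2) by (auto simp: basis_paths_def valid_NT successively_append_iff)

lemma before_junction:
  assumes "NT (a # P) \<in> B_B n E s t Z" "P \<noteq> []"
  shows "t a = s (hd P)"
  using BB_BA[OF assms(1)] assms(2) successively_append_iff[of _ "[a]" P]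
  by (auto simp: basis_paths_def valid_NT)

lemma no_both:
  assumes "NT (P @ [a]) \<in> B_B n E s t Z" "P \<noteq> []" "endp n s t P" "1 \<noteq> n"
  shows "P @ [a] \<noteq> a # P"
proof
  assume eq: "P @ [a] = a # P"
  then have "hd P = a" using assms(2) by (metis hd_append2 list.sel(1))
  then show False using after_junction[OF assms(1,2)] endp_props[OF assms(3,4)] by simp
qed


lemma support_special:
  assumes P: "P \<noteq> []" "endp n s t P" "1 \<noteq> n"
    and nz: "(delta0 E (glue n \<circ> s) (glue n \<circ> t) (B_B n E s t Z) 1 (NT P) (a, \<gamma>) :: 'k::field) \<noteq> 0"
  shows "special_pair n E s t Z a \<gamma> \<and> pstar n \<gamma> = \<gamma>"
proof -
  note ep = endp_props[OF P(2,3)]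
  have "(a \<in> E \<and> glue n (s a) = 1 \<and> \<gamma> = NT (P @ [a]) \<and> \<gamma> \<in> B_B n E s t Z) \<or>
        (a \<in> E \<and> glue n (t a) = 1 \<and> \<gamma> = NT (a # P) \<and> \<gamma> \<in> B_B n E s t Z)"
    using nz unfolding delta0_NT by (simp split: if_splits)
  then show ?thesis
  proof
    assume h: "a \<in> E \<and> glue n (s a) = 1 \<and> \<gamma> = NT (P @ [a]) \<and> \<gamma> \<in> B_B n E s t Z"
    have j: "t (last P) = s a" using after_junction[of P a] h P by auto
    have "\<gamma> \<in> basis_paths {1..n} E s t Z" using h BB_BA by blast
    then show ?thesis using h j ep P(1) glue_eq1[of n "s a"]
      by (auto simp: special_pair_def)
  next
    assume h: "a \<in> E \<and> glue n (t a) = 1 \<and> \<gamma> = NT (a # P) \<and> \<gamma> \<in> B_B n E s t Z"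
    have j: "t a = s (hd P)" using before_junction[of a P] h P by auto
    have "\<gamma> \<in> basis_paths {1..n} E s t Z" using h BB_BA by blast
    then show ?thesis using h j ep P(1) glue_eq1[of n "t a"]
      by (auto simp: special_pair_def)
  qed
qed

lemma unique_path:
  assumes P: "P \<noteq> []" "endp n s t P" and P': "P' \<noteq> []" "endp n s t P'" and d: "1 \<noteq> n"
    and nz: "(delta0 E (glue n \<circ> s) (glue n \<circ> t) (B_B n E s t Z) 1 (NT P) (a, \<gamma>) :: 'k::field) \<noteq> 0"
    and nz': "(delta0 E (glue n \<circ> s) (glue n \<circ> t) (B_B n E s t Z) 1 (NT P') (a, \<gamma>) :: 'k::field) \<noteq> 0"
  shows "P = P'"
proof -
  note ep = endp_props[OF P(2) d] and ep' = endp_props[OF P'(2) d]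
  have c: "(\<gamma> = NT (P @ [a]) \<and> \<gamma> \<in> B_B n E s t Z) \<or> (\<gamma> = NT (a # P) \<and> \<gamma> \<in> B_B n E s t Z)"
    using nz unfolding delta0_NT by (simp split: if_splits)
  have c': "(\<gamma> = NT (P' @ [a]) \<and> \<gamma> \<in> B_B n E s t Z) \<or> (\<gamma> = NT (a # P') \<and> \<gamma> \<in> B_B n E s t Z)"
    using nz' unfolding delta0_NT by (simp split: if_splits)
  show ?thesis
  proof (cases "\<gamma> = NT (P @ [a])")
    case True
    show ?thesis
    proof (cases "\<gamma> = NT (P' @ [a])")
      case True
      then show ?thesis using \<open>\<gamma> = NT (P @ [a])\<close> by simp
    next
      case False
      then have g: "\<gamma> = NT (a # P')" "\<gamma> \<in> B_B n E s t Z" using c' by auto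
      have "P @ [a] = a # P'" using g True by simp
      then have "hd P = a" using P(1) by (metis hd_append2 list.sel(1))
      then show ?thesis using after_junction[of P a n E s t Z] g True P(1) ep by auto
    qed
  next
    case False
    then have g: "\<gamma> = NT (a # P)" "\<gamma> \<in> B_B n E s t Z" using c by auto
    show ?thesis
    proof (cases "\<gamma> = NT (P' @ [a])")
      case True
      have "P' @ [a] = a # P" using g True by simp
      then have "last P = a" using P(1) by (metis last_ConsR last_snoc)
      then show ?thesis using before_junction[of a P n E s t Z] g True P(1) ep by auto
    next
      case False
      then show ?thesis using c' g by auto
    qed
  qed
qed


lemma BB_E: "NT l \<in> B_B n E s t Z \<Longrightarrow> set l \<subseteq> E"
  by (auto simp: B_B_def basis_paths_def valid_NT)

lemma BB_sub: "NT L \<in> B_B n E s t Z \<Longrightarrow> sublist M L \<Longrightarrow> M \<noteq> [] \<Longrightarrow> NT M \<in> B_B n E s t Z"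
  unfolding B_B_def by (rule basis_sublist)

lemma BB_noZ: "q \<in> B_B n E s t Z \<Longrightarrow> r \<in> Z_B n E s t Z \<Longrightarrow> \<not> subpath r q"
  by (auto simp: B_B_def basis_paths_def)

lemma sum_ind_delta:
  assumes "finite S"
  shows "(\<Sum>a\<in>S. if l = a \<and> Q a then 1 else 0) = (if l \<in> S \<and> Q l then 1 else (0::'k::comm_ring_1))"
proof -
  have "(\<Sum>a\<in>S. if l = a \<and> Q a then 1 else (0::'k)) = (\<Sum>a\<in>S. if l = a then (if Q l then 1 else 0) else 0)"
    by (rule sum.cong) auto
  also have "\<dots> = (if l \<in> S then (if Q l then 1 else 0) else 0)" using assms by simp
  finally show ?thesis by simp
qed

lemma kernel:
  assumes P: "P \<noteq> []" "endp n s t P" "1 \<noteq> n" and fE: "finite E"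
  shows "delta1 (Z_B n E s t Z) (B_B n E s t Z)
           (delta0 E (glue n \<circ> s) (glue n \<circ> t) (B_B n E s t Z) 1 (NT P) :: _ \<Rightarrow> 'k::field) = (\<lambda>_. 0)"
proof
  fix x :: "(nat, 'a) qpath \<times> (nat, 'a) qpath"
  obtain r q where x: "x = (r, q)" by fastforce
  define BB where "BB = B_B n E s t Z"
  define ZB where "ZB = Z_B n E s t Z"
  define v where "v = (delta0 E (glue n \<circ> s) (glue n \<circ> t) BB 1 (NT P) :: _ \<Rightarrow> 'k)"
  define EA where "EA = {a\<in>E. glue n (s a) = 1 \<and> NT (P @ [a]) \<in> BB}"
  define EB where "EB = {a\<in>E. glue n (t a) = 1 \<and> NT (a # P) \<in> BB}"
  define c where "c = (\<lambda>a \<gamma>. (of_nat (occ_coeff BB r q a \<gamma>) :: 'k))"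
  note ep = endp_props[OF P(2,3)]
  have fin: "finite EA" "finite EB" using fE by (auto simp: EA_def EB_def)
  have vA: "v (a, NT (P @ [a])) = 1" if "a \<in> EA" for a
    using that no_both[of P a n E s t Z] P unfolding v_def delta0_NT by (auto simp: EA_def BB_def)
  have vB: "v (a, NT (a # P)) = - 1" if "a \<in> EB" for a
  proof -
    have "NT (P @ [a]) \<noteq> NT (a # P) \<or> NT (P @ [a]) \<notin> BB"
      using no_both[of P a n E s t Z] P by (auto simp: BB_def)
    then show ?thesis using that unfolding v_def delta0_NT by (auto simp: EB_def)
  qed
  define SA where "SA = (\<lambda>a. (a, NT (P @ [a]) :: (nat, 'a) qpath)) ` EA"
  define SB where "SB = (\<lambda>a. (a, NT (a # P) :: (nat, 'a) qpath)) ` EB"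
  have supp: "{x. v x \<noteq> 0} \<subseteq> SA \<union> SB"
  proof
    fix y assume "y \<in> {x. v x \<noteq> 0}"
    moreover obtain a \<gamma> where y: "y = (a, \<gamma>)" by fastforce
    ultimately have "v (a, \<gamma>) \<noteq> 0" by simp
    then show "y \<in> SA \<union> SB"
      unfolding v_def delta0_NT SA_def SB_def EA_def EB_def y by (auto split: if_splits)
  qed
  have disj: "SA \<inter> SB = {}"
  proof -
    have "False" if "a \<in> EA" "P @ [a] = a # P" for a
      using no_both[of P a n E s t Z] P that by (auto simp: EA_def BB_def)
    then show ?thesis by (auto simp: SA_def SB_def)
  qed
  have step1: "(\<Sum>y\<in>{x. v x \<noteq> 0}. v y * c (fst y) (snd y))
      = (\<Sum>a\<in>EA. c a (NT (P @ [a]))) - (\<Sum>a\<in>EB. c a (NT (a # P)))"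
  proof -
    have "(\<Sum>y\<in>{x. v x \<noteq> 0}. v y * c (fst y) (snd y)) = (\<Sum>y\<in>SA \<union> SB. v y * c (fst y) (snd y))"
      by (rule sum.mono_neutral_left) (use fin supp in \<open>auto simp: SA_def SB_def\<close>)
    also have "\<dots> = (\<Sum>y\<in>SA. v y * c (fst y) (snd y)) + (\<Sum>y\<in>SB. v y * c (fst y) (snd y))"
      by (rule sum.union_disjoint) (use fin disj in \<open>auto simp: SA_def SB_def\<close>)
    also have "(\<Sum>y\<in>SA. v y * c (fst y) (snd y)) = (\<Sum>a\<in>EA. c a (NT (P @ [a])))"
      unfolding SA_def by (subst sum.reindex) (auto simp: inj_on_def vA intro: sum.cong)
    also have "(\<Sum>y\<in>SB. v y * c (fst y) (snd y)) = - (\<Sum>a\<in>EB. c a (NT (a # P)))"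
      unfolding SB_def by (subst sum.reindex) (auto simp: inj_on_def vB sum_negf intro: sum.cong)
    finally show ?thesis by simp
  qed
  have main: "(\<Sum>a\<in>EA. c a (NT (P @ [a]))) - (\<Sum>a\<in>EB. c a (NT (a # P))) = 0" if rZB: "r \<in> ZB"
  proof (cases r)
    case (Triv w)
    then show ?thesis by (simp add: c_def occ_coeff_def)
  next
    case (NT l)
    define g where "g i = (if q = NT (take i l @ P @ drop i l) \<and> q \<in> BB then 1 else (0::'k))" for i
    have rA: "replace_at l i (NT (P @ [l ! i])) = NT (take i l @ P @ drop i l)" if "i < length l" for i
      using that by (simp add: replace_at_def Cons_nth_drop_Suc)
    have rB: "replace_at l i (NT (l ! i # P)) = NT (take (Suc i) l @ P @ drop (Suc i) l)" if "i < length l" for i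
      using that by (simp add: replace_at_def take_Suc_conv_app_nth)
    have memA: "l ! i \<in> EA" if "i < length l" "NT (take i l @ P @ drop i l) \<in> BB" for i
    proof -
      have eq: "take i l @ P @ drop i l = take i l @ (P @ [l ! i]) @ drop (Suc i) l"
        using that(1) by (simp add: Cons_nth_drop_Suc)
      have sl: "sublist (P @ [l ! i]) (take i l @ P @ drop i l)" unfolding eq by (rule sublist_appendI)
      have sb: "NT (P @ [l ! i]) \<in> BB"
        using BB_sub[of "take i l @ P @ drop i l" n E s t Z "P @ [l ! i]"] that(2) sl
        by (simp add: BB_def)
      have "l ! i \<in> E" using BB_E[OF sb[unfolded BB_def]] by simp
      moreover have "t (last P) = s (l ! i)" using after_junction[of P "l ! i" n E s t Z] sb P(1) by (simp add: BB_def)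
      ultimately show ?thesis using sb ep by (simp add: EA_def)
    qed
    have memB: "l ! i \<in> EB" if "i < length l" "NT (take (Suc i) l @ P @ drop (Suc i) l) \<in> BB" for i
    proof -
      have eq: "take (Suc i) l @ P @ drop (Suc i) l = take i l @ (l ! i # P) @ drop (Suc i) l"
        using that(1) by (simp add: take_Suc_conv_app_nth)
      have sl: "sublist (l ! i # P) (take (Suc i) l @ P @ drop (Suc i) l)" unfolding eq by (rule sublist_appendI)
      have sb: "NT (l ! i # P) \<in> BB"
        using BB_sub[of "take (Suc i) l @ P @ drop (Suc i) l" n E s t Z "l ! i # P"] that(2) sl
        by (simp add: BB_def)
      have "l ! i \<in> E" using BB_E[OF sb[unfolded BB_def]] by simp
      moreover have "t (l ! i) = s (hd P)" using before_junction[of "l ! i" P n E s t Z] sb P(1) by (simp add: BB_def)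
      ultimately show ?thesis using sb ep by (simp add: EB_def)
    qed
    have cc: "c a \<gamma> = (\<Sum>i<length l. if l ! i = a \<and> replace_at l i \<gamma> = q \<and> q \<in> BB then 1 else 0)" for a \<gamma>
      unfolding c_def occ_coeff_def NT by (simp add: of_nat_card_sum)
    have A: "(\<Sum>a\<in>EA. c a (NT (P @ [a]))) = (\<Sum>i<length l. g i)"
    proof -
      have "(\<Sum>a\<in>EA. c a (NT (P @ [a]))) = (\<Sum>i<length l. \<Sum>a\<in>EA.
          if l ! i = a \<and> replace_at l i (NT (P @ [a])) = q \<and> q \<in> BB then 1 else 0)"
        unfolding cc by (rule sum.swap)
      also have "\<dots> = (\<Sum>i<length l. g i)"
      proof (rule sum.cong[OF refl])
        fix i assume i: "i \<in> {..<length l}"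
        have "(\<Sum>a\<in>EA. if l ! i = a \<and> replace_at l i (NT (P @ [a])) = q \<and> q \<in> BB then 1 else (0::'k))
            = (\<Sum>a\<in>EA. if l ! i = a \<and> (q = NT (take i l @ P @ drop i l) \<and> q \<in> BB) then 1 else 0)"
          proof (rule sum.cong[OF refl])
            fix a assume "a \<in> EA"
            show "(if l ! i = a \<and> replace_at l i (NT (P @ [a])) = q \<and> q \<in> BB then 1 else (0::'k)) = (if l ! i = a \<and> (q = NT (take i l @ P @ drop i l) \<and> q \<in> BB) then 1 else 0)"
            proof (cases "l ! i = a")
              case True
              have "replace_at l i (NT (P @ [a])) = NT (take i l @ P @ drop i l)" using rA[of i] i True by auto
              then have "(l ! i = a \<and> replace_at l i (NT (P @ [a])) = q \<and> q \<in> BB) \<longleftrightarrow> (l ! i = a \<and> (q = NT (take i l @ P @ drop i l) \<and> q \<in> BB))" by blast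
              then show ?thesis by (rule if_cong) simp_all
            qed simp
          qed
        also have "\<dots> = (if l ! i \<in> EA \<and> (q = NT (take i l @ P @ drop i l) \<and> q \<in> BB) then 1 else 0)"
          by (rule sum_ind_delta[OF fin(1)])
        also have "\<dots> = g i"
        proof (cases "q = NT (take i l @ P @ drop i l) \<and> q \<in> BB")
          case True
          then have "l ! i \<in> EA" using memA[of i] i by auto
          then show ?thesis using True by (simp add: g_def)
        qed (simp add: g_def)
        finally show "(\<Sum>a\<in>EA. if l ! i = a \<and> replace_at l i (NT (P @ [a])) = q \<and> q \<in> BB then 1 else (0::'k)) = g i" .
      qed
      finally show ?thesis .
    qed
    have B: "(\<Sum>a\<in>EB. c a (NT (a # P))) = (\<Sum>i<length l. g (Suc i))"
    proof -
      have "(\<Sum>a\<in>EB. c a (NT (a # P))) = (\<Sum>i<length l. \<Sum>a\<in>EB.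
          if l ! i = a \<and> replace_at l i (NT (a # P)) = q \<and> q \<in> BB then 1 else 0)"
        unfolding cc by (rule sum.swap)
      also have "\<dots> = (\<Sum>i<length l. g (Suc i))"
      proof (rule sum.cong[OF refl])
        fix i assume i: "i \<in> {..<length l}"
        have "(\<Sum>a\<in>EB. if l ! i = a \<and> replace_at l i (NT (a # P)) = q \<and> q \<in> BB then 1 else (0::'k))
            = (\<Sum>a\<in>EB. if l ! i = a \<and> (q = NT (take (Suc i) l @ P @ drop (Suc i) l) \<and> q \<in> BB) then 1 else 0)"
          proof (rule sum.cong[OF refl])
            fix a assume "a \<in> EB"
            show "(if l ! i = a \<and> replace_at l i (NT (a # P)) = q \<and> q \<in> BB then 1 else (0::'k)) = (if l ! i = a \<and> (q = NT (take (Suc i) l @ P @ drop (Suc i) l) \<and> q \<in> BB) then 1 else 0)"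
            proof (cases "l ! i = a")
              case True
              have "replace_at l i (NT (a # P)) = NT (take (Suc i) l @ P @ drop (Suc i) l)" using rB[of i] i True by auto
              then have "(l ! i = a \<and> replace_at l i (NT (a # P)) = q \<and> q \<in> BB) \<longleftrightarrow> (l ! i = a \<and> (q = NT (take (Suc i) l @ P @ drop (Suc i) l) \<and> q \<in> BB))" by blast
              then show ?thesis by (rule if_cong) simp_all
            qed simp
          qed
        also have "\<dots> = (if l ! i \<in> EB \<and> (q = NT (take (Suc i) l @ P @ drop (Suc i) l) \<and> q \<in> BB) then 1 else 0)"
          by (rule sum_ind_delta[OF fin(2)])
        also have "\<dots> = g (Suc i)"
        proof (cases "q = NT (take (Suc i) l @ P @ drop (Suc i) l) \<and> q \<in> BB")
          case True
          then have "l ! i \<in> EB" using memB[of i] i by auto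
          then show ?thesis using True by (simp add: g_def)
        qed (simp add: g_def)
        finally show "(\<Sum>a\<in>EB. if l ! i = a \<and> replace_at l i (NT (a # P)) = q \<and> q \<in> BB then 1 else (0::'k)) = g (Suc i)" .
      qed
      finally show ?thesis .
    qed
    have s1: "sublist l (P @ l)" by (metis sublist_appendI append_Nil2)
    have s2: "sublist l (l @ P)" by (metis sublist_appendI append_Nil)
    have g0: "g 0 = 0" unfolding g_def using BB_noZ[of "NT (P @ l)" n E s t Z r] rZB NT s1 by (auto simp: BB_def ZB_def)
    have gl: "g (length l) = 0" unfolding g_def using BB_noZ[of "NT (l @ P)" n E s t Z r] rZB NT s2 by (auto simp: BB_def ZB_def)
    have "(\<Sum>i<length l. g (Suc i)) - (\<Sum>i<length l. g i) = 0"
      using sum_lessThan_telescope[of g "length l"] g0 gl by (simp add: sum_subtractf)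
    then show ?thesis using A B by simp
  qed
  show "delta1 ZB BB v x = 0"
  proof (cases "r \<in> ZB")
    case True
    then show ?thesis using step1 main unfolding delta1_def x c_def by simp
  next
    case False
    then show ?thesis unfolding delta1_def x by simp
  qed
qed



lemma vs_fscale: "vector_space (fscale :: 'k::field \<Rightarrow> ('x \<Rightarrow> 'k) \<Rightarrow> _)"
  proof
  fix a b :: 'k and x y :: "'x \<Rightarrow> 'k"
  show "fscale a (x + y) = fscale a x + fscale a y" by (simp add: fscale_def fun_eq_iff distrib_left)
  show "fscale (a + b) x = fscale a x + fscale b x" by (simp add: fscale_def fun_eq_iff distrib_right)
  show "fscale a (fscale b x) = fscale (a * b) x" by (simp add: fscale_def fun_eq_iff mult.assoc)
  show "fscale 1 x = x" by (simp add: fscale_def)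
qed

lemma indep_count:
  fixes v :: "'p \<Rightarrow> ('x \<Rightarrow> 'k::field)" and w :: "'p \<Rightarrow> 'x"
  assumes fS: "finite S" and Zs: "\<And>f x. f \<in> Zs \<Longrightarrow> f x \<noteq> 0 \<Longrightarrow> x \<in> S"
    and vZ: "\<And>p. p \<in> Ps \<Longrightarrow> v p \<in> Zs" and vw: "\<And>p. p \<in> Ps \<Longrightarrow> v p (w p) \<noteq> 0"
    and uq: "\<And>p p'. p \<in> Ps \<Longrightarrow> p' \<in> Ps \<Longrightarrow> v p' (w p) \<noteq> 0 \<Longrightarrow> p' = p"
  shows "card Ps \<le> vector_space.dim (fscale :: 'k \<Rightarrow> _) Zs"
proof (cases "finite Ps")
  case False
  then show ?thesis by simp
next
  case True
  interpret vector_space "fscale :: 'k \<Rightarrow> ('x \<Rightarrow> 'k) \<Rightarrow> _" by (rule vs_fscale)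
  define I where "I = v ` Ps"
  have inj: "inj_on v Ps"
  proof (rule inj_onI)
    fix p p' assume "p \<in> Ps" "p' \<in> Ps" "v p = v p'"
    then show "p = p'" using uq[of p p'] vw[of p] by metis
  qed
  have cI: "card I = card Ps" unfolding I_def using inj by (simp add: card_image)
  have indI: "independent I"
  proof
    assume "dependent I"
    then obtain T u y0 where T: "finite T" "T \<subseteq> I" "(\<Sum>y\<in>T. fscale (u y) y) = 0"
      and y0: "y0 \<in> T" "u y0 \<noteq> 0"
      unfolding dependent_explicit by blast
    obtain p where p: "p \<in> Ps" "y0 = v p" using T(2) y0(1) unfolding I_def by blast
    have "(\<Sum>y\<in>T. fscale (u y) y) (w p) = 0" using T(3) by simp
    then have e0: "(\<Sum>y\<in>T. u y * y (w p)) = 0" by (simp add: sum_fun_apply fscale_def)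
    have e1: "(\<Sum>y\<in>T. u y * y (w p)) = u y0 * y0 (w p) + (\<Sum>y\<in>T - {y0}. u y * y (w p))"
      by (rule sum.remove[OF T(1) y0(1)])
    have e2: "(\<Sum>y\<in>T - {y0}. u y * y (w p)) = 0"
    proof (rule sum.neutral, rule ballI)
      fix y assume y: "y \<in> T - {y0}"
      then obtain p' where p': "p' \<in> Ps" "y = v p'" using T(2) unfolding I_def by blast
      have "y (w p) = 0"
      proof (rule ccontr)
        assume "y (w p) \<noteq> 0"
        then have "p' = p" using uq[of p p'] p(1) p'(1) p'(2) by simp
        then show False using y p(2) p'(2) by simp
      qed
      then show "u y * y (w p) = 0" by simp
    qed
    have "u y0 * y0 (w p) \<noteq> 0" using y0(2) vw[OF p(1)] p(2) by simp
    then show False using e0 e1 e2 by simp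
  qed
  have IZ: "I \<subseteq> Zs" unfolding I_def using vZ by blast
  obtain B where B: "I \<subseteq> B" "B \<subseteq> Zs" "independent B" "Zs \<subseteq> span B"
    using maximal_independent_subset_extend[OF IZ indI] by blast
  define W where "W = (\<lambda>x. \<lambda>y. if y = x then (1::'k) else 0) ` S"
  have fW: "finite W" unfolding W_def using fS by simp
  have ZW: "Zs \<subseteq> span W"
  proof
    fix f assume f: "f \<in> Zs"
    have eq: "f = (\<Sum>x\<in>S. fscale (f x) (\<lambda>y. if y = x then (1::'k) else 0))"
    proof (rule ext)
      fix y
      have "(\<Sum>x\<in>S. fscale (f x) (\<lambda>y. if y = x then (1::'k) else 0)) y
          = (\<Sum>x\<in>S. if y = x then f x else 0)"
        by (simp add: sum_fun_apply fscale_def if_distrib cong: if_cong)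
      also have "\<dots> = (if y \<in> S then f y else 0)" using fS by simp
      also have "\<dots> = f y" using Zs[OF f, of y] by auto
      finally show "f y = (\<Sum>x\<in>S. fscale (f x) (\<lambda>y. if y = x then (1::'k) else 0)) y" by simp
    qed
    have "(\<Sum>x\<in>S. fscale (f x) (\<lambda>y. if y = x then (1::'k) else 0)) \<in> span W"
      by (rule span_sum, rule span_scale, rule span_base) (auto simp: W_def)
    then show "f \<in> span W" using eq by simp
  qed
  have fB: "finite B" using independent_span_bound[OF fW B(3)] B(2) ZW by blast
  have dB: "card B = dim Zs" by (rule basis_card_eq_dim[OF B(2) B(4) B(3)])
  have "card I \<le> card B" by (rule card_mono[OF fB B(1)])
  then show ?thesis using cI dB by simp
qed


lemma finite_basis:
  assumes "monomial_data V E s t Z"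
  shows "finite (basis_paths V E s t Z)"
proof -
  obtain m where H: "\<And>p. valid_path V E s t p \<and> plen p \<ge> m \<Longrightarrow> \<exists>r\<in>Z. subpath r p"
    using assms unfolding monomial_data_def by blast
  have fV: "finite V" and fE: "finite E" using assms unfolding monomial_data_def by auto
  have "basis_paths V E s t Z \<subseteq> Triv ` V \<union> NT ` {l. set l \<subseteq> E \<and> length l \<le> m}"
  proof
    fix p assume p: "p \<in> basis_paths V E s t Z"
    show "p \<in> Triv ` V \<union> NT ` {l. set l \<subseteq> E \<and> length l \<le> m}"
    proof (cases p)
      case (Triv v)
      then show ?thesis using p by (auto simp: basis_paths_def valid_path_def)
    next
      case (NT l)
      have "\<not> plen p \<ge> m" using H[of p] p by (auto simp: basis_paths_def)
      then show ?thesis using p NT by (auto simp: basis_paths_def valid_path_def)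
    qed
  qed
  moreover have "finite (Triv ` V \<union> NT ` {l. set l \<subseteq> E \<and> length l \<le> m})"
    using fV finite_lists_length_le[OF fE, of m] by simp
  ultimately show ?thesis by (rule finite_subset)
qed

theorem corollary3p23:
  fixes n :: nat and E :: "'a set" and s t :: "'a \<Rightarrow> nat"
    and Z :: "(nat, 'a) qpath set"
  assumes mono: "monomial_data {1..n} E s t Z"
    and distinct: "1 \<noteq> n" and n_vertex: "n \<ge> 1"
    and nonisolated1: "\<exists>a\<in>E. s a = 1 \<or> t a = 1"
    and nonisolatedn: "\<exists>a\<in>E. s a = n \<or> t a = n"
  shows "kspp TYPE('k::field) n E s t Z \<ge> sp TYPE('k) n E s t Z
       \<and> card {(\<alpha>, p). special_pair n E s t Z \<alpha> p} \<ge> sp TYPE('k) n E s t Z"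
proof -
  have fE: "finite E" using mono unfolding monomial_data_def by auto
  have fBA: "finite (basis_paths {1..n} E s t Z)" by (rule finite_basis[OF mono])
  define Ps where "Ps = {p. special_path TYPE('k) n E s t Z p}"
  define vf where "vf p = (delta0 E (glue n \<circ> s) (glue n \<circ> t) (B_B n E s t Z) 1 (pstar n p) :: _ \<Rightarrow> 'k)" for p
  define w where "w p = (SOME x. vf p x \<noteq> 0)" for p
  have props: "\<exists>P. p = NT P \<and> P \<noteq> [] \<and> endp n s t P" if asm: "p \<in> Ps" for p
  proof -
    have sp: "special_path TYPE('k) n E s t Z p" using asm by (simp add: Ps_def)
    obtain P where "p = NT P" "P \<noteq> []" "endp n s t P" using special_NT[OF sp distinct] by blast
    then show ?thesis by blast
  qed
  have vw: "vf p (w p) \<noteq> 0" if asm: "p \<in> Ps" for p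
  proof -
    obtain P where "p = NT P" "(delta0 E (glue n \<circ> s) (glue n \<circ> t) (B_B n E s t Z) 1 (NT P) :: _ \<Rightarrow> 'k) \<noteq> (\<lambda>_. 0)"
    proof -
      have sp: "special_path TYPE('k) n E s t Z p" using asm by (simp add: Ps_def)
      show ?thesis using special_NT[OF sp distinct] that by blast
    qed
    then have "\<exists>x. vf p x \<noteq> 0" unfolding vf_def by auto
    then show ?thesis unfolding w_def by (rule someI_ex)
  qed
  have supp: "special_pair n E s t Z (fst x) (snd x) \<and> pstar n (snd x) = snd x" if asm: "p \<in> Ps" "vf p x \<noteq> 0" for p x
  proof -
    obtain P where P: "p = NT P" "P \<noteq> []" "endp n s t P" using props[OF asm(1)] by blast
    obtain a \<gamma> where x: "x = (a, \<gamma>)" by fastforce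
    show ?thesis using support_special[of P n s t E Z a \<gamma>] P distinct asm(2) unfolding x vf_def by simp
  qed
  have uq: "p' = p" if asm: "p \<in> Ps" "p' \<in> Ps" "vf p' (w p) \<noteq> 0" for p p'
  proof -
    obtain P where P: "p = NT P" "P \<noteq> []" "endp n s t P" using props[OF asm(1)] by blast
    obtain P' where P': "p' = NT P'" "P' \<noteq> []" "endp n s t P'" using props[OF asm(2)] by blast
    obtain a \<gamma> where x: "w p = (a, \<gamma>)" by fastforce
    have "P = P'" using unique_path[of P n s t P' E Z a \<gamma>] P P' distinct vw[OF asm(1)] asm(3)
      unfolding x vf_def by simp
    then show ?thesis using P P' by simp
  qed
  define S where "S = (\<lambda>(\<alpha>, q). (\<alpha>, pstar n q)) ` (E \<times> basis_paths {1..n} E s t Z)"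
  have fS: "finite S" unfolding S_def using fE fBA by simp
  have ZS: "x \<in> S" if asm: "f \<in> Z_spp TYPE('k) n E s t Z" "f x \<noteq> 0" for f x
  proof -
    obtain \<alpha> q where "special_pair n E s t Z \<alpha> q" "x = (\<alpha>, pstar n q)"
      using asm unfolding Z_spp_def by blast
    note sp = this
    have "\<alpha> \<in> E" "q \<in> basis_paths {1..n} E s t Z" using sp(1) unfolding special_pair_def by simp_all
    then show ?thesis unfolding S_def sp(2) by (intro image_eqI[of _ _ "(\<alpha>, q)"]) auto
  qed
  have vZ: "vf p \<in> Z_spp TYPE('k) n E s t Z" if asm: "p \<in> Ps" for p
  proof -
    obtain P where P: "p = NT P" "P \<noteq> []" "endp n s t P" using props[OF asm] by blast
    have "\<exists>\<alpha> q. special_pair n E s t Z \<alpha> q \<and> x = (\<alpha>, pstar n q)" if "vf p x \<noteq> 0" for x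
      using supp[OF \<open>p \<in> Ps\<close> that] by (metis prod.collapse)
    moreover have "delta1 (Z_B n E s t Z) (B_B n E s t Z) (vf p) = (\<lambda>_. 0)"
      using kernel[of P n s t E Z] P distinct fE unfolding vf_def by simp
    ultimately show ?thesis unfolding Z_spp_def by blast
  qed
  have c1: "card Ps \<le> vector_space.dim (fscale :: 'k \<Rightarrow> _) (Z_spp TYPE('k) n E s t Z)"
    by (rule indep_count[OF fS ZS vZ vw uq])
  have inj: "inj_on w Ps"
  proof (rule inj_onI)
    fix p p' assume "p \<in> Ps" "p' \<in> Ps" "w p = w p'"
    then show "p = p'" using uq[of p p'] vw[of p'] by metis
  qed
  have sub: "w ` Ps \<subseteq> {(\<alpha>, p). special_pair n E s t Z \<alpha> p}"
  proof
    fix y assume "y \<in> w ` Ps"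
    then obtain p where p: "p \<in> Ps" "y = w p" by blast
    have "special_pair n E s t Z (fst y) (snd y)" using supp[OF p(1) vw[OF p(1)]] p(2) by simp
    then show "y \<in> {(\<alpha>, p). special_pair n E s t Z \<alpha> p}" by (cases y) simp
  qed
  have "{(\<alpha>, p). special_pair n E s t Z \<alpha> p} \<subseteq> E \<times> basis_paths {1..n} E s t Z"
    unfolding special_pair_def by blast
  then have fin2: "finite {(\<alpha>, p). special_pair n E s t Z \<alpha> p}"
    by (rule finite_subset) (use fE fBA in simp)
  have c2: "card Ps \<le> card {(\<alpha>, p). special_pair n E s t Z \<alpha> p}"
    by (rule card_inj_on_le[OF inj sub fin2])
  show ?thesis using c1 c2 unfolding kspp_def sp_def Ps_def by simp
qed

end
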